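(* Let $G$ be a finite group, $H\le G$ and $p$ a prime. Then $\mathfrak{p}_{H,p}=\mathfrak{p}_{O^p(H),p}$ as ideals of the Burnside $G$-Tambara functor $\underline{A}_G$.
   Context: $A(H)$ is the Burnside ring of a finite group $H$; for $I\le H$, $\varphi^I_{H,p}\colon A(H)\to\mathbb{Z}/p\mathbb{Z}$ is the ring map $X\mapsto|X^I|\bmod p$. $\underline{A}_G$ has $\underline{A}_G(G/L)=A(L)$ (with restrictions, transfers $K\times_L-$, norms $\mathrm{Map}_L(K,-)$ and conjugations). For $K\le G$, $\mathfrak{p}_{K,p}$ is the ideal with $\mathfrak{p}_{K,p}(G/L)=\bigcap_{I\le L,\ I\preccurlyeq_GK}\ker(\varphi^I_{L,p})$, where $I\preccurlyeq_GK$ means $I$ is conjugate in $G$ to a subgroup of $K$. $O^p(H)$ is the intersection of all normal subgroups of $H$ of $p$-power index. *)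

theory Defs
  imports "HOL-Algebra.Algebra"
begin

text \<open>All subgroups are subgroups of a fixed ambient group G (HOL-Algebra locale style).\<close>

definition conjset :: "('a, 'b) monoid_scheme \<Rightarrow> 'a \<Rightarrow> 'a set \<Rightarrow> 'a set" where
  "conjset G g J = {g \<otimes>\<^bsub>G\<^esub> j \<otimes>\<^bsub>G\<^esub> inv\<^bsub>G\<^esub> g | j. j \<in> J}"

definition subconj :: "('a, 'b) monoid_scheme \<Rightarrow> 'a set \<Rightarrow> 'a set \<Rightarrow> bool" where
  "subconj G I K \<longleftrightarrow> (\<exists>g\<in>carrier G. conjset G g I \<subseteq> K)"

definition conj_class :: "('a, 'b) monoid_scheme \<Rightarrow> 'a set \<Rightarrow> 'a set \<Rightarrow> 'a set set" where
  "conj_class G L J = (\<lambda>g. conjset G g J) ` L"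

text \<open>Isomorphism classes of transitive L-sets = L-conjugacy classes of subgroups of L.\<close>
definition subgroup_classes :: "('a, 'b) monoid_scheme \<Rightarrow> 'a set \<Rightarrow> 'a set set set" where
  "subgroup_classes G L = {conj_class G L J | J. subgroup J G \<and> J \<subseteq> L}"

text \<open>The Burnside ring A(L): the free abelian group on isomorphism classes of transitive
  L-sets L/J, i.e. integer-valued functions on L-conjugacy classes of subgroups of L
  (zero elsewhere); [X] corresponds to its orbit-type multiplicities.\<close>
definition burnside :: "('a, 'b) monoid_scheme \<Rightarrow> 'a set \<Rightarrow> ('a set set \<Rightarrow> int) set" where
  "burnside G L = {x. \<forall>C. C \<notin> subgroup_classes G L \<longrightarrow> x C = 0}"

definition mark :: "('a, 'b) monoid_scheme \<Rightarrow> 'a set \<Rightarrow> 'a set \<Rightarrow> 'a set \<Rightarrow> nat" where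
  "mark G L I J = card {C \<in> {l_coset G g J | g. g \<in> L}. \<forall>i\<in>I. l_coset G i C = C}"

text \<open>phi^I_{L,p}: A(L) -> Z/pZ, X |-> |X^I| mod p, extended additively
  (values in Z/pZ represented by residues in int).\<close>
definition phi :: "('a, 'b) monoid_scheme \<Rightarrow> 'a set \<Rightarrow> nat \<Rightarrow> 'a set \<Rightarrow> ('a set set \<Rightarrow> int) \<Rightarrow> int" where
  "phi G L p I x =
     (\<Sum>C\<in>subgroup_classes G L. x C * int (mark G L I (SOME J. J \<in> C))) mod int p"

text \<open>The ideal p_{K,p} of the Burnside Tambara functor, evaluated at G/L.\<close>
definition pideal :: "('a, 'b) monoid_scheme \<Rightarrow> 'a set \<Rightarrow> nat \<Rightarrow> 'a set \<Rightarrow> ('a set set \<Rightarrow> int) set" where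
  "pideal G K p L = {x \<in> burnside G L.
      \<forall>I. subgroup I G \<and> I \<subseteq> L \<and> subconj G I K \<longrightarrow> phi G L p I x = 0}"

definition Op :: "('a, 'b) monoid_scheme \<Rightarrow> nat \<Rightarrow> 'a set \<Rightarrow> 'a set" where
  "Op G p H = \<Inter>{N. N \<lhd> (G\<lparr>carrier := H\<rparr>) \<and>
                    (\<exists>k. card (rcosets\<^bsub>G\<lparr>carrier := H\<rparr>\<^esub> N) = p ^ k)}"

end

theory Submission
  imports Defs
begin

lemma (in group) act_group_action:
  assumes subI: "subgroup I G"
    and cl: "\<And>i y. i\<in>I \<Longrightarrow> y\<in>E \<Longrightarrow> act i y \<in> E"
    and one: "\<And>y. y\<in>E \<Longrightarrow> act \<one> y = y"
    and comp: "\<And>i j y. i\<in>I \<Longrightarrow> j\<in>I \<Longrightarrow> y\<in>E \<Longrightarrow> act (i \<otimes> j) y = act i (act j y)"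
  shows "group_action (G\<lparr>carrier := I\<rparr>) E (\<lambda>i. \<lambda>y\<in>E. act i y)"
proof -
  have gK: "group (G\<lparr>carrier := I\<rparr>)" using subI subgroup.subgroup_is_group is_group by blast
  have bij: "(\<lambda>y\<in>E. act i y) \<in> Bij E" if i: "i \<in> I" for i
  proof -
    have ii: "inv i \<in> I" by (rule subgroup.m_inv_closed[OF subI i])
    have c1: "act i (act (inv i) y) = y" if "y \<in> E" for y
      using comp[OF i ii that] one[OF that] subI i subgroup.mem_carrier by fastforce
    have c2: "act (inv i) (act i y) = y" if "y \<in> E" for y
      using comp[OF ii i that] one[OF that] subI i subgroup.mem_carrier by fastforce
    have "bij_betw (act i) E E"
      by (rule bij_betwI[where g="act (inv i)"]) (auto simp: cl[OF i] cl[OF ii] c1 c2)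
    then have "bij_betw (\<lambda>y\<in>E. act i y) E E"
      by (simp add: bij_betw_def inj_on_def image_def)
    then show ?thesis by (simp add: Bij_def)
  qed
  show ?thesis
    unfolding group_action_def group_hom_def group_hom_axioms_def
  proof (intro conjI gK group_BijGroup homI)
    fix x assume "x \<in> carrier (G\<lparr>carrier := I\<rparr>)"
    then show "(\<lambda>y\<in>E. act x y) \<in> carrier (BijGroup E)" using bij by (simp add: BijGroup_def)
  next
    fix x y assume x: "x \<in> carrier (G\<lparr>carrier := I\<rparr>)" and y: "y \<in> carrier (G\<lparr>carrier := I\<rparr>)"
    then show "(\<lambda>z\<in>E. act (x \<otimes>\<^bsub>G\<lparr>carrier := I\<rparr>\<^esub> y) z) =
       (\<lambda>z\<in>E. act x z) \<otimes>\<^bsub>BijGroup E\<^esub> (\<lambda>z\<in>E. act y z)"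
      using bij[of x] bij[of y] comp cl
      by (auto simp: BijGroup_def compose_def fun_eq_iff)
  qed
qed

lemma (in group) fix_cong:
  assumes subI: "subgroup I G" and fin: "finite I"
    and subI': "subgroup I' G" "I' \<subseteq> I"
    and idx: "card I = card I' * m" and mdvd: "m dvd p ^ k" and pp: "Factorial_Ring.prime p"
    and finE: "finite E"
    and cl: "\<And>i y. i\<in>I \<Longrightarrow> y\<in>E \<Longrightarrow> act i y \<in> E"
    and one: "\<And>y. y\<in>E \<Longrightarrow> act \<one> y = y"
    and comp: "\<And>i j y. i\<in>I \<Longrightarrow> j\<in>I \<Longrightarrow> y\<in>E \<Longrightarrow> act (i \<otimes> j) y = act i (act j y)"
    and fixI': "\<And>i y. i\<in>I' \<Longrightarrow> y\<in>E \<Longrightarrow> act i y = y"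
  shows "p dvd card E - card {y\<in>E. \<forall>i\<in>I. act i y = y}"
proof -
  let ?K = "G\<lparr>carrier := I\<rparr>"
  let ?phi = "\<lambda>i. \<lambda>y\<in>E. act i y"
  interpret A: group_action ?K E ?phi using act_group_action[where I=I and E=E and act=act, OF subI cl one comp] by simp
  have gK: "group ?K" using subI subgroup.subgroup_is_group is_group by blast
  define Fx where "Fx = {y\<in>E. \<forall>i\<in>I. act i y = y}"
  have orb: "orbit ?K ?phi y = {act i y | i. i \<in> I}" if "y \<in> E" for y
    using that by (auto simp: orbit_def)
  have orb': "orbit ?K ?phi y = (\<lambda>i. act i y) ` I" if "y \<in> E" for y
    using that by (auto simp: orbit_def)
  have stab: "stabilizer ?K ?phi y = {i \<in> I. act i y = y}" if "y \<in> E" for y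
    using that by (auto simp: stabilizer_def)
  have I'pos: "card I' > 0"
    using subI' fin subgroup.one_closed by (metis card_gt_0_iff empty_iff finite_subset)
  have orbsize: "\<exists>j. card (orbit ?K ?phi y) = p ^ j" if y: "y \<in> E" for y
  proof -
    have os: "card (orbit ?K ?phi y) * card (stabilizer ?K ?phi y) = card I"
      using A.orbit_stabilizer_theorem[OF y] by (simp add: order_def)
    have sK: "subgroup (stabilizer ?K ?phi y) ?K" by (rule A.stabilizer_subgroup[OF y])
    have I'K: "subgroup I' ?K" using subgroup_incl[OF subI'(1) subI subI'(2)] by simp
    have I'st: "I' \<subseteq> stabilizer ?K ?phi y" using subI' fixI'[OF _ y] by (auto simp: stab[OF y])
    have "subgroup I' (?K\<lparr>carrier := stabilizer ?K ?phi y\<rparr>)"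
      using group.subgroup_incl[OF gK I'K sK I'st] .
    moreover have "group (?K\<lparr>carrier := stabilizer ?K ?phi y\<rparr>)"
      by (rule group.subgroup_imp_group[OF gK sK])
    ultimately have "card (rcosets\<^bsub>?K\<lparr>carrier := stabilizer ?K ?phi y\<rparr>\<^esub> I') * card I'
        = card (stabilizer ?K ?phi y)"
      using group.lagrange by (fastforce simp: order_def)
    then obtain s where "card (stabilizer ?K ?phi y) = card I' * s" by (metis mult.commute)
    with os idx have "card (orbit ?K ?phi y) * s * card I' = m * card I'" by (simp add: ac_simps)
    with I'pos have "card (orbit ?K ?phi y) * s = m" by simp
    then have "card (orbit ?K ?phi y) dvd p ^ k" using mdvd dvd_trans by (metis dvd_triv_left)
    then show ?thesis using pp by (metis divides_primepow_nat)
  qed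
  have fixiff: "(\<forall>i\<in>I. act i y = y) \<longleftrightarrow> card (orbit ?K ?phi y) = 1" if y: "y \<in> E" for y
  proof
    assume h: "\<forall>i\<in>I. act i y = y"
    have oI: "\<one> \<in> I" by (rule subgroup.one_closed[OF subI])
    have "(\<lambda>i. act i y) ` I = (\<lambda>i. y) ` I" by (rule image_cong) (use h in auto)
    also have "\<dots> = {y}" using oI by auto
    finally show "card (orbit ?K ?phi y) = 1" by (simp add: orb'[OF y])
  next
    assume "card (orbit ?K ?phi y) = 1"
    moreover have "y \<in> orbit ?K ?phi y" by (rule A.orbit_refl[OF y])
    ultimately have o1: "(\<lambda>i. act i y) ` I = {y}" unfolding orb'[OF y]
      by (metis card_1_singletonE singletonD)
    show "\<forall>i\<in>I. act i y = y"
    proof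
      fix i assume "i \<in> I"
      then have "act i y \<in> (\<lambda>i. act i y) ` I" by (rule imageI)
      then show "act i y = y" using o1 by simp
    qed
  qed
  have sameorb: "orbit ?K ?phi x = orbit ?K ?phi y" if y: "y \<in> E" and x: "x \<in> orbit ?K ?phi y" for x y
  proof -
    obtain i where i: "i \<in> I" and xi: "x = act i y" using x by (auto simp: orb[OF y])
    have xE: "x \<in> E" using cl[OF i y] xi by simp
    have ic: "i \<in> carrier G" by (rule subgroup.mem_carrier[OF subI i])
    show ?thesis
    proof
      show "orbit ?K ?phi x \<subseteq> orbit ?K ?phi y"
      proof
        fix z assume "z \<in> orbit ?K ?phi x"
        then obtain j where j: "j \<in> I" "z = act j x" by (auto simp: orb[OF xE])
        then have "z = act (j \<otimes> i) y" using comp[OF j(1) i y] xi by simp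
        moreover have "j \<otimes> i \<in> I" by (rule subgroup.m_closed[OF subI j(1) i])
        ultimately show "z \<in> orbit ?K ?phi y" by (auto simp: orb[OF y])
      qed
    next
      show "orbit ?K ?phi y \<subseteq> orbit ?K ?phi x"
      proof
        fix z assume "z \<in> orbit ?K ?phi y"
        then obtain j where j: "j \<in> I" "z = act j y" by (auto simp: orb[OF y])
        have ii: "inv i \<in> I" by (rule subgroup.m_inv_closed[OF subI i])
        have jc: "j \<in> carrier G" by (rule subgroup.mem_carrier[OF subI j(1)])
        have jiI: "j \<otimes> inv i \<in> I" by (rule subgroup.m_closed[OF subI j(1) ii])
        have "act (j \<otimes> inv i) x = act (j \<otimes> inv i \<otimes> i) y"
          using comp[OF jiI i y] xi by simp
        also have "j \<otimes> inv i \<otimes> i = j" using ic jc by (simp add: m_assoc)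
        finally have "z = act (j \<otimes> inv i) x" using j by simp
        then show "z \<in> orbit ?K ?phi x" using jiI by (auto simp: orb[OF xE])
      qed
    qed
  qed
  define f where "f y = (if (\<forall>i\<in>I. act i y = y) then 0 else 1::nat)" for y
  have "p dvd (\<Sum>orb\<in>orbits ?K E ?phi. \<Sum>x\<in>orb. f x)"
  proof (rule dvd_sum)
    fix orb assume "orb \<in> orbits ?K E ?phi"
    then obtain y where y: "y \<in> E" and oy: "orb = orbit ?K ?phi y" by (auto simp: orbits_def)
    show "p dvd (\<Sum>x\<in>orb. f x)"
    proof (cases "card orb = 1")
      case True
      then have "orb = {y}" using A.orbit_refl[OF y] oy by (metis card_1_singletonE singletonD)
      moreover have "f y = 0" using fixiff[OF y] True oy by (simp add: f_def)
      ultimately show ?thesis by simp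
    next
      case False
      have "f x = 1" if "x \<in> orb" for x
      proof -
        have xE: "x \<in> E" using that oy y A.element_image by (auto simp: orb[OF y] cl)
        have "card (orbit ?K ?phi x) \<noteq> 1" using sameorb[OF y] that oy False by simp
        then show ?thesis using fixiff[OF xE] by (simp add: f_def)
      qed
      then have "(\<Sum>x\<in>orb. f x) = card orb" by simp
      moreover obtain j where "card orb = p ^ j" using orbsize[OF y] oy by blast
      moreover have "j \<noteq> 0" using False \<open>card orb = p ^ j\<close> by (metis power_0)
      ultimately show ?thesis by (simp add: dvd_power)
    qed
  qed
  also have "(\<Sum>orb\<in>orbits ?K E ?phi. \<Sum>x\<in>orb. f x) = (\<Sum>x\<in>E. f x)"
    by (rule A.disjoint_sum[OF finE])
  also have "(\<Sum>x\<in>E. f x) = card (E - Fx)"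
    unfolding f_def Fx_def using finE by (simp add: sum.If_cases Diff_eq) (rule arg_cong[where f=card]; blast)
  also have "card (E - Fx) = card E - card Fx"
    using finE by (simp add: Fx_def card_Diff_subset finite_subset)
  finally show ?thesis by (simp add: Fx_def)
qed

lemma (in group) conjset_eq:
  "g \<in> carrier G \<Longrightarrow> conjset G g A = (\<lambda>a. g \<otimes> a \<otimes> inv g) ` A"
  by (auto simp: conjset_def)

lemma (in group) conjset_coset:
  assumes "g \<in> carrier G" "A \<subseteq> carrier G"
  shows "conjset G g A = g <# A #> inv g"
  using assms by (auto simp: conjset_def l_coset_def r_coset_def)

lemma (in group) conjset_subgroup:
  assumes "g \<in> carrier G" "subgroup A G"
  shows "subgroup (conjset G g A) G"
  using conjset_coset[OF assms(1) subgroup.subset[OF assms(2)]]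
    subgroup_conjugation_is_surj2[OF assms] by simp

lemma (in group) card_conjset:
  assumes g: "g \<in> carrier G" and A: "A \<subseteq> carrier G"
  shows "card (conjset G g A) = card A"
proof -
  have "inj_on (\<lambda>a. g \<otimes> a \<otimes> inv g) A"
    by (rule inj_onI) (use g A in \<open>auto dest: conjugation_is_inj\<close>)
  then show ?thesis by (simp add: conjset_eq[OF g] card_image)
qed

lemma (in group) preimage_subgroup:
  assumes g: "g \<in> carrier G" and N: "subgroup N G"
  shows "subgroup {a \<in> carrier G. g \<otimes> a \<otimes> inv g \<in> N} G"
proof (rule subgroupI)
  show "{a \<in> carrier G. g \<otimes> a \<otimes> inv g \<in> N} \<subseteq> carrier G" by blast
  show "{a \<in> carrier G. g \<otimes> a \<otimes> inv g \<in> N} \<noteq> {}"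
    using g subgroup.one_closed[OF N] by (intro exI[of _ \<one>] notI) (auto dest: equals0D[of _ \<one>])
next
  fix a assume a: "a \<in> {a \<in> carrier G. g \<otimes> a \<otimes> inv g \<in> N}"
  then have ac: "a \<in> carrier G" and aN: "g \<otimes> a \<otimes> inv g \<in> N" by auto
  have "inv (g \<otimes> a \<otimes> inv g) = g \<otimes> inv a \<otimes> inv g"
    using g ac by (simp add: inv_mult_group m_assoc)
  moreover have "inv (g \<otimes> a \<otimes> inv g) \<in> N" by (rule subgroup.m_inv_closed[OF N aN])
  ultimately show "inv a \<in> {a \<in> carrier G. g \<otimes> a \<otimes> inv g \<in> N}" using ac by simp
next
  fix a b assume a: "a \<in> {a \<in> carrier G. g \<otimes> a \<otimes> inv g \<in> N}" and b: "b \<in> {a \<in> carrier G. g \<otimes> a \<otimes> inv g \<in> N}"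
  then have ac: "a \<in> carrier G" and aN: "g \<otimes> a \<otimes> inv g \<in> N"
    and bc: "b \<in> carrier G" and bN: "g \<otimes> b \<otimes> inv g \<in> N" by auto
  have "(g \<otimes> a \<otimes> inv g) \<otimes> (g \<otimes> b \<otimes> inv g) = g \<otimes> (a \<otimes> b) \<otimes> inv g"
    using g ac bc by (simp add: m_assoc) (simp add: m_assoc[symmetric])
  moreover have "(g \<otimes> a \<otimes> inv g) \<otimes> (g \<otimes> b \<otimes> inv g) \<in> N" by (rule subgroup.m_closed[OF N aN bN])
  ultimately show "a \<otimes> b \<in> {a \<in> carrier G. g \<otimes> a \<otimes> inv g \<in> N}" using ac bc by simp
qed

lemma (in group) mark_cong:
  assumes subL: "subgroup L G" and finG: "finite (carrier G)"
    and subA: "subgroup A G" and AL: "A \<subseteq> L"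
    and subA': "subgroup A' G" and A'A: "A' \<subseteq> A"
    and nrm: "\<And>i j. i \<in> A \<Longrightarrow> j \<in> A' \<Longrightarrow> inv i \<otimes> j \<otimes> i \<in> A'"
    and idx: "card A = card A' * m" and mdvd: "m dvd p ^ k" and pp: "Factorial_Ring.prime p"
    and J: "J \<subseteq> carrier G"
  shows "int (mark G L A J) mod int p = int (mark G L A' J) mod int p"
proof -
  define Y where "Y = {l_coset G l J | l. l \<in> L}"
  define E where "E = {C \<in> Y. \<forall>i\<in>A'. l_coset G i C = C}"
  have Lc: "L \<subseteq> carrier G" by (rule subgroup.subset[OF subL])
  have Ac: "A \<subseteq> carrier G" by (rule subgroup.subset[OF subA])
  have Yfin: "finite Y"
  proof -
    have "Y = (\<lambda>l. l <# J) ` L" by (auto simp: Y_def)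
    moreover have "finite L" using Lc finG finite_subset by blast
    ultimately show ?thesis by simp
  qed
  have Ec: "C \<subseteq> carrier G" if CE: "C \<in> E" for C
  proof -
    obtain l where "l \<in> L" "C = l <# J" using CE by (auto simp: E_def Y_def)
    then show ?thesis using l_coset_subset_G[OF J, of l] Lc by blast
  qed
  have finE: "finite E" using Yfin by (simp add: E_def)
  have clY: "i <# C \<in> Y" if i: "i \<in> A" and C: "C \<in> Y" for i C
  proof -
    obtain l where l: "l \<in> L" and Cl: "C = l <# J" using C by (auto simp: Y_def)
    have "i <# C = (i \<otimes> l) <# J" using Cl lcos_m_assoc[OF J] i l Ac Lc by blast
    moreover have "i \<otimes> l \<in> L" using subgroup.m_closed[OF subL] i l AL by blast
    ultimately show ?thesis by (auto simp: Y_def)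
  qed
  have cl: "i <# C \<in> E" if i: "i \<in> A" and C: "C \<in> E" for i C
  proof -
    have ic: "i \<in> carrier G" using i Ac by blast
    have Cc: "C \<subseteq> carrier G" by (rule Ec[OF C])
    have "j <# (i <# C) = i <# C" if j: "j \<in> A'" for j
    proof -
      have jc: "j \<in> carrier G" using j A'A Ac by blast
      have k: "inv i \<otimes> j \<otimes> i \<in> A'" by (rule nrm[OF i j])
      have "j <# (i <# C) = (j \<otimes> i) <# C" using lcos_m_assoc[OF Cc jc ic] .
      also have "j \<otimes> i = i \<otimes> (inv i \<otimes> j \<otimes> i)" using ic jc by (simp add: m_assoc[symmetric])
      also have "(i \<otimes> (inv i \<otimes> j \<otimes> i)) <# C = i <# ((inv i \<otimes> j \<otimes> i) <# C)"
        using lcos_m_assoc[OF Cc ic] ic jc by simp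
      also have "(inv i \<otimes> j \<otimes> i) <# C = C" using C k by (auto simp: E_def)
      finally show ?thesis .
    qed
    moreover have "i <# C \<in> Y" using clY[OF i] C by (auto simp: E_def)
    ultimately show ?thesis by (auto simp: E_def)
  qed
  have fin: "finite A" using Ac finG finite_subset by blast
  have "p dvd card E - card {C \<in> E. \<forall>i\<in>A. i <# C = C}"
  proof (rule fix_cong[OF subA fin subA' A'A idx mdvd pp finE])
    show "\<And>i y. i \<in> A \<Longrightarrow> y \<in> E \<Longrightarrow> i <# y \<in> E" by (rule cl)
    show "\<And>y. y \<in> E \<Longrightarrow> \<one> <# y = y" using Ec lcos_mult_one by blast
    show "\<And>i j y. i \<in> A \<Longrightarrow> j \<in> A \<Longrightarrow> y \<in> E \<Longrightarrow> (i \<otimes> j) <# y = i <# (j <# y)"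
      using Ec lcos_m_assoc Ac by blast
    show "\<And>i y. i \<in> A' \<Longrightarrow> y \<in> E \<Longrightarrow> i <# y = y" by (auto simp: E_def)
  qed
  moreover have "{C \<in> E. \<forall>i\<in>A. i <# C = C} = {C \<in> Y. \<forall>i\<in>A. i <# C = C}"
    using A'A by (auto simp: E_def)
  moreover have "card {C \<in> E. \<forall>i\<in>A. i <# C = C} \<le> card E"
    using finE by (intro card_mono) auto
  ultimately have "card E mod p = card {C \<in> Y. \<forall>i\<in>A. i <# C = C} mod p"
    by (simp add: mod_eq_dvd_iff_nat)
  then have "int (card E) mod int p = int (card {C \<in> Y. \<forall>i\<in>A. i <# C = C}) mod int p"
    by (metis zmod_int)
  then show ?thesis by (simp add: mark_def Y_def E_def)
qed

lemma (in group) index_dvd: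
  assumes subH: "subgroup H G"
    and nN: "N \<lhd> G\<lparr>carrier := H\<rparr>"
    and ck: "card (rcosets\<^bsub>G\<lparr>carrier := H\<rparr>\<^esub> N) = p ^ k"
    and subB: "subgroup B G" and BH: "B \<subseteq> H" and finH: "finite H"
  shows "\<exists>t. card B = card (B \<inter> N) * t \<and> t dvd p ^ k"
proof -
  let ?H = "G\<lparr>carrier := H\<rparr>"
  have gH: "group ?H" by (rule subgroup_imp_group[OF subH])
  have sBH: "subgroup B ?H" by (rule subgroup_incl[OF subB subH BH])
  interpret S: second_isomorphism_grp N ?H B
    unfolding second_isomorphism_grp_def second_isomorphism_grp_axioms_def
    using nN sBH by blast
  have "card (carrier (?H\<lparr>carrier := B\<rparr> Mod (N \<inter> B))) = card (carrier (?H\<lparr>carrier := N <#>\<^bsub>?H\<^esub> B\<rparr> Mod N))"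
    using S.normal_intersection_quotient_isom by (intro iso_same_card) (auto simp: is_iso_def)
  then have eqc: "card (rcosets\<^bsub>G\<lparr>carrier := B\<rparr>\<^esub> (N \<inter> B)) = card (rcosets\<^bsub>G\<lparr>carrier := N <#>\<^bsub>?H\<^esub> B\<rparr>\<^esub> N)"
    by (simp add: FactGroup_def)
  have nBN: "B \<inter> N \<lhd> ?H\<lparr>carrier := B\<rparr>" by (rule S.normal_subgrp_intersection_normal)
  have gB: "group (G\<lparr>carrier := B\<rparr>)" by (rule subgroup_imp_group[OF subB])
  have s1: "subgroup (N \<inter> B) (G\<lparr>carrier := B\<rparr>)" using nBN by (simp add: normal_def Int_commute)
  have l1: "card (rcosets\<^bsub>G\<lparr>carrier := B\<rparr>\<^esub> (N \<inter> B)) * card (N \<inter> B) = card B"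
    using group.lagrange[OF gB s1] by (simp add: order_def)
  have sNB: "subgroup (N <#>\<^bsub>?H\<^esub> B) ?H" by (rule S.normal_set_mult_subgroup)
  have sN: "subgroup N ?H" using nN by (simp add: normal_def)
  have NNB: "N \<subseteq> N <#>\<^bsub>?H\<^esub> B" by (rule S.H_contained_in_set_mult)
  have s2: "subgroup N (?H\<lparr>carrier := N <#>\<^bsub>?H\<^esub> B\<rparr>)" by (rule group.subgroup_incl[OF gH sN sNB NNB])
  have gNB: "group (?H\<lparr>carrier := N <#>\<^bsub>?H\<^esub> B\<rparr>)" by (rule group.subgroup_imp_group[OF gH sNB])
  have l2: "card (rcosets\<^bsub>G\<lparr>carrier := N <#>\<^bsub>?H\<^esub> B\<rparr>\<^esub> N) * card N = card (N <#>\<^bsub>?H\<^esub> B)"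
    using group.lagrange[OF gNB s2] by (simp add: order_def)
  obtain r where l3: "card (N <#>\<^bsub>?H\<^esub> B) * r = card H"
    using group.lagrange[OF gH sNB] by (metis order_def partial_object.select_convs(1) partial_object.surjective partial_object.update_convs(1) mult.commute)
  have l4: "p ^ k * card N = card H"
    using group.lagrange[OF gH sN] ck by (simp add: order_def)
  have Npos: "card N > 0"
    using sN finH subgroup.one_closed subgroup.subset
    by (metis card_gt_0_iff empty_iff finite_subset partial_object.select_convs(1) partial_object.surjective partial_object.update_convs(1))
  define t where "t = card (rcosets\<^bsub>G\<lparr>carrier := B\<rparr>\<^esub> (N \<inter> B))"
  have "t * card N * r = p ^ k * card N" using l2 l3 l4 eqc by (simp add: t_def)
  then have "t * r = p ^ k" using Npos by (simp add: ac_simps)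
  then have "t dvd p ^ k" by (metis dvd_triv_left)
  moreover have "card B = card (B \<inter> N) * t" using l1 by (simp add: t_def Int_commute mult.commute)
  ultimately show ?thesis by blast
qed

lemma (in group) normal_conj_sub:
  assumes subH: "subgroup H G" and nN: "N \<lhd> G\<lparr>carrier := H\<rparr>" and x: "x \<in> H" and h: "h \<in> N"
  shows "x \<otimes> h \<otimes> inv x \<in> N"
proof -
  have gH: "group (G\<lparr>carrier := H\<rparr>)" by (rule subgroup_imp_group[OF subH])
  have "x \<otimes>\<^bsub>G\<lparr>carrier := H\<rparr>\<^esub> h \<otimes>\<^bsub>G\<lparr>carrier := H\<rparr>\<^esub> inv\<^bsub>G\<lparr>carrier := H\<rparr>\<^esub> x \<in> N"
    using group.normal_invE(2)[OF gH nN, of x h] x h by simp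
  then show ?thesis using m_inv_consistent[OF subH x] by simp
qed

lemma (in group) inv_cancel_left':
  "g \<in> carrier G \<Longrightarrow> z \<in> carrier G \<Longrightarrow> inv g \<otimes> (g \<otimes> z) = z"
  by (simp add: m_assoc[symmetric])

lemma (in group) conjset_mono: "A \<subseteq> B \<Longrightarrow> conjset G g A \<subseteq> conjset G g B"
  by (auto simp: conjset_def)

lemma (in group) main_lemma:
  assumes finG: "finite (carrier G)" and subH: "subgroup H G" and pp: "Factorial_Ring.prime p"
    and subL: "subgroup L G"
  shows "pideal G H p L = pideal G (Op G p H) p L"
proof -
  let ?Hg = "G\<lparr>carrier := H\<rparr>"
  define F where "F = {N. N \<lhd> ?Hg \<and> (\<exists>k. card (rcosets\<^bsub>?Hg\<^esub> N) = p ^ k)}"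
  have OpF: "Op G p H = \<Inter>F" by (simp add: Op_def F_def)
  have gH: "group ?Hg" by (rule subgroup_imp_group[OF subH])
  have finH: "finite H" using subgroup.subset[OF subH] finG finite_subset by blast
  have HF: "H \<in> F"
  proof -
    have sHH: "subgroup H ?Hg" using group.subgroup_self[OF gH] by simp
    have "H \<lhd> ?Hg"
      using group.normal_self[OF gH] by simp
    moreover have "card (rcosets\<^bsub>?Hg\<^esub> H) = p ^ 0"
    proof -
      have "card (rcosets\<^bsub>?Hg\<^esub> H) * card H = card H"
        using group.lagrange[OF gH sHH] by (simp add: order_def)
      moreover have "card H > 0" using finH subgroup.one_closed[OF subH] card_gt_0_iff by blast
      ultimately show ?thesis by simp
    qed
    ultimately show ?thesis unfolding F_def by blast
  qed
  have finF: "finite F"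
  proof -
    have "F \<subseteq> Pow H"
    proof
      fix N assume "N \<in> F"
      then have "subgroup N ?Hg" by (simp add: F_def normal_def)
      then show "N \<in> Pow H" using subgroup.subset[of N ?Hg] by simp
    qed
    then show ?thesis using finite_subset finH by (metis finite_Pow_iff)
  qed
  have OpH: "Op G p H \<subseteq> H" unfolding OpF using HF by (rule Inter_lower)
  show "pideal G H p L = pideal G (Op G p H) p L"
  proof
    show "pideal G H p L \<subseteq> pideal G (Op G p H) p L"
      using OpH by (auto simp: pideal_def subconj_def) (meson dual_order.trans)
  next
    show "pideal G (Op G p H) p L \<subseteq> pideal G H p L"
    proof
      fix x assume x: "x \<in> pideal G (Op G p H) p L"
      have "phi G L p I x = 0" if subI: "subgroup I G" and IL: "I \<subseteq> L" and sc: "subconj G I H" for I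
      proof -
        obtain g where g: "g \<in> carrier G" and cI: "conjset G g I \<subseteq> H"
          using sc by (auto simp: subconj_def)
        define A where "A S = {a \<in> I. g \<otimes>\<^bsub>G\<^esub> a \<otimes>\<^bsub>G\<^esub> inv\<^bsub>G\<^esub> g \<in> \<Inter>S}" for S
        have Ic: "I \<subseteq> carrier G" by (rule subgroup.subset[OF subI])
        have main: "subgroup (A S) G \<and> (\<forall>J. J \<subseteq> carrier G \<longrightarrow>
            int (mark G L I J) mod int p = int (mark G L (A S) J) mod int p)" if SF: "S \<subseteq> F" for S
          using finite_subset[OF SF finF] SF
        proof (induction S rule: finite_induct)
          case empty
          have "A {} = I" by (auto simp: A_def)
          then show ?case using subI by simp
        next
          case (insert N S)
          then have NF: "N \<in> F" and SF': "S \<subseteq> F" by auto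
          have IH: "subgroup (A S) G" "\<And>J. J \<subseteq> carrier G \<Longrightarrow>
            int (mark G L I J) mod int p = int (mark G L (A S) J) mod int p"
            using insert.IH[OF SF'] by auto
          obtain k where nN: "N \<lhd> ?Hg" and ck: "card (rcosets\<^bsub>?Hg\<^esub> N) = p ^ k"
            using NF by (auto simp: F_def)
          define M where "M = {a \<in> carrier G. g \<otimes>\<^bsub>G\<^esub> a \<otimes>\<^bsub>G\<^esub> inv\<^bsub>G\<^esub> g \<in> N}"
          have ASI: "A S \<subseteq> I" by (auto simp: A_def)
          have Aeq: "A (insert N S) = A S \<inter> M" using Ic by (auto simp: A_def M_def)
          have subN: "subgroup N G"
            using incl_subgroup[OF subH] nN by (simp add: normal_def)
          have subM: "subgroup M G" unfolding M_def by (rule preimage_subgroup[OF g subN])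
          have subA': "subgroup (A S \<inter> M) G" by (rule subgroups_Inter_pair[OF IH(1) subM])
          define B where "B = conjset G g (A S)"
          have BH: "B \<subseteq> H" using conjset_mono[OF ASI] cI by (auto simp: B_def)
          have subB: "subgroup B G" unfolding B_def by (rule conjset_subgroup[OF g IH(1)])
          have BN: "conjset G g (A S \<inter> M) = B \<inter> N"
            using Ic ASI by (auto simp: B_def conjset_def M_def)
          obtain t where t: "card B = card (B \<inter> N) * t" "t dvd p ^ k"
            using index_dvd[OF subH nN ck subB BH finH] by blast
          have c1: "card B = card (A S)" unfolding B_def
            by (rule card_conjset[OF g]) (use ASI Ic in blast)
          have c2: "card (B \<inter> N) = card (A S \<inter> M)" unfolding BN[symmetric]
            by (rule card_conjset[OF g]) (use ASI Ic in blast)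
          have nrm: "inv i \<otimes> j \<otimes> i \<in> A S \<inter> M" if i: "i \<in> A S" and j: "j \<in> A S \<inter> M" for i j
          proof -
            have ic: "i \<in> carrier G" and jc: "j \<in> carrier G" using i j ASI Ic by auto
            have "inv i \<otimes> j \<otimes> i \<in> A S"
              using IH(1) i j by (intro subgroup.m_closed subgroup.m_inv_closed) auto
            moreover have "g \<otimes> (inv i \<otimes> j \<otimes> i) \<otimes> inv g \<in> N"
            proof -
              define y where "y = g \<otimes>\<^bsub>G\<^esub> i \<otimes>\<^bsub>G\<^esub> inv\<^bsub>G\<^esub> g"
              have yH: "y \<in> H" using cI i ASI by (auto simp: y_def conjset_def)
              have iyH: "inv y \<in> H" using subgroup.m_inv_closed[OF subH yH] .
              have hN: "g \<otimes> j \<otimes> inv g \<in> N" using j by (simp add: M_def)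
              have "inv y \<otimes> (g \<otimes> j \<otimes> inv g) \<otimes> inv (inv y) \<in> N"
                by (rule normal_conj_sub[OF subH nN iyH hN])
              moreover have "inv y \<otimes> (g \<otimes> j \<otimes> inv g) \<otimes> inv (inv y) = g \<otimes> (inv i \<otimes> j \<otimes> i) \<otimes> inv g"
                using g ic jc by (simp add: y_def inv_mult_group m_assoc inv_cancel_left')
              ultimately show ?thesis by simp
            qed
            ultimately show ?thesis using ic jc by (simp add: M_def)
          qed
          have idx: "card (A S) = card (A S \<inter> M) * t" using t(1) c1 c2 by simp
          have ASL: "A S \<subseteq> L" using ASI IL by blast
          show ?case
          proof
            show "subgroup (A (insert N S)) G" using subA' Aeq by simp
            show "\<forall>J. J \<subseteq> carrier G \<longrightarrow>
              int (mark G L I J) mod int p = int (mark G L (A (insert N S)) J) mod int p"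
              using IH(2) mark_cong[OF subL finG IH(1) ASL subA' _ nrm idx t(2) pp] Aeq by auto
          qed
        qed
        then have subAF: "subgroup (A F) G"
          and congF: "\<And>J. J \<subseteq> carrier G \<Longrightarrow> int (mark G L I J) mod int p = int (mark G L (A F) J) mod int p"
          by auto
        have "A F \<subseteq> L" using IL by (auto simp: A_def)
        moreover have "subconj G (A F) (Op G p H)"
          unfolding subconj_def OpF using g by (auto simp: A_def conjset_def)
        ultimately have phiAF: "phi G L p (A F) x = 0" using x subAF by (auto simp: pideal_def)
        have tm: "x C * int (mark G L I (SOME J. J \<in> C)) mod int p =
                    x C * int (mark G L (A F) (SOME J. J \<in> C)) mod int p"
          if C: "C \<in> subgroup_classes G L" for C
        proof -
          obtain J0 where J0: "subgroup J0 G" "J0 \<subseteq> L" and CJ: "C = conj_class G L J0"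
            using C by (auto simp: subgroup_classes_def)
          have "\<one> \<in> L" by (rule subgroup.one_closed[OF subL])
          then have "C \<noteq> {}" by (auto simp: CJ conj_class_def)
          then have "(SOME J. J \<in> C) \<in> C" by (metis all_not_in_conv someI_ex)
          then obtain l where l: "l \<in> L" and eq: "(SOME J. J \<in> C) = conjset G l J0"
            by (auto simp: CJ conj_class_def)
          have lc: "l \<in> carrier G" using l subgroup.subset[OF subL] by blast
          have "conjset G l J0 \<subseteq> carrier G"
            using lc J0 subgroup.subset[OF subL] by (auto simp: conjset_def)
          then have cg: "int (mark G L I (SOME J. J \<in> C)) mod int p = int (mark G L (A F) (SOME J. J \<in> C)) mod int p"
            using congF eq by simp
          show ?thesis by (metis cg mod_mult_right_eq)
        qed
        have "phi G L p I x = phi G L p (A F) x"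
          unfolding phi_def
          by (subst (1 2) mod_sum_eq[symmetric]) (simp add: tm cong: sum.cong)
        with phiAF show ?thesis by simp
      qed
      then show "x \<in> pideal G H p L" using x by (auto simp: pideal_def)
    qed
  qed
qed

theorem lemma4p15:
  fixes G :: "('a, 'b) monoid_scheme" and H :: "'a set" and p :: nat
  assumes "group G" and "finite (carrier G)" and "subgroup H G" and "Factorial_Ring.prime p"
  shows "\<forall>L. subgroup L G \<longrightarrow> pideal G H p L = pideal G (Op G p H) p L"
  using group.main_lemma[OF assms(1) assms(2) assms(3) assms(4)] by blast

end
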